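(* Fix $c\in(0,1/2)$, $\sigma,\varepsilon,\delta\in(0,1)$ and a probability distribution $\mu$ on $\mathbb R^d\times\mathbb R$. Let $\mathbb P\subseteq\mathbb P_{\mathrm O}(c)$ and let $\mathbb D$ be a class of covariate-outcome distributions such that: (1) $\mathbb D$ satisfies Condition 4 with mass function $M(\cdot)$ and constant $c$; (2) every $\mathcal P\in\mathbb D$ is $\sigma$-smooth with respect to $\mu$; (3) $\mathrm{fat}_\gamma(\mathbb P)<\infty$ at scale $\gamma=\Theta(c\sigma M(\varepsilon/2))$; (4) the covering number of $\mathbb D$ in total variation distance at scale $O(cM(\varepsilon/2))$ is finite. There is a universal constant $\eta\ge1/256$ and an algorithm that, given $n$ i.i.d. samples from $\mathcal C_{\mathcal D}$ for any observational study $\mathcal D$ realizable with respect to $(\mathbb P,\mathbb D)$, outputs $\hat\tau$ with $|\hat\tau-\tau_{\mathcal D}|\le\varepsilon$ with probability at least $1-\delta$, where $n=O\!\left(\frac{1}{\eta M(\varepsilon/2)^2}\Big(\mathrm{fat}_{\eta c\sigma M(\varepsilon/2)}(\mathbb P)\log\frac{1}{\eta c\sigma M(\varepsilon/2)}+\log\frac{N_{\eta cM(\varepsilon/2)}(\mathbb D)}{\delta}\Big)\right)$.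
   Context: An observational study is a probability distribution $\mathcal D$ of a random tuple $(X,T,Y(0),Y(1))$ with $X\in\mathbb R^d$, $T\in\{0,1\}$, $Y(0),Y(1)\in\mathbb R$; the laws $\mathcal D_{X,Y(t)}$ of $(X,Y(t))$ have densities. The censored distribution $\mathcal C_{\mathcal D}$ is the law of $(X,T,Y(T))$; $\tau_{\mathcal D}=\mathbb E_{\mathcal D}[Y(1)-Y(0)]$. Generalized propensity scores: $p_t(x,y)=\Pr_{\mathcal D}[T=t\mid X=x,Y(t)=y]$. $\mathcal D$ is realizable with respect to $(\mathbb P,\mathbb D)$ if $p_0,p_1\in\mathbb P$ and $\mathcal D_{X,Y(0)},\mathcal D_{X,Y(1)}\in\mathbb D$. $\mathbb P_{\mathrm O}(c)=\{p:\mathbb R^d\times\mathbb R\to[0,1]\ :\ c<p(x,y)<1-c\ \forall (x,y)\}$. For $\mathcal P$ with density, $\mathcal P(x,y)$ is its density. Condition 4: $\mathbb D$ satisfies it with mass function $M:(0,\infty)\to[0,1]$ if for every $\varepsilon>0$ and $\mathcal P,\mathcal Q\in\mathbb D$ with $|\mathbb E_{\mathcal P}[y]-\mathbb E_{\mathcal Q}[y]|>\varepsilon$ there is $S\subseteq\mathbb R^d\times\mathbb R$ with $\mathcal P(S),\mathcal Q(S)\ge M(\varepsilon)/c$ and $\mathcal P(x,y)/\mathcal Q(x,y)\notin\big(\tfrac{c}{2(1-c)},\tfrac{2(1-c)}{c}\big)$ for all $(x,y)\in S$. $\sigma$-smooth: a distribution with density $\mathcal P$ is $\sigma$-smooth w.r.t.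 $\mu$ if $\mathcal P(z)\le\mu(z)/\sigma$ for all $z$. Fat-shattering dimension: for a class $\mathbb H$ of functions $\mathcal Z\to[0,1]$, a set $\{s_1,\dots,s_m\}$ is $\gamma$-shattered if there are thresholds $t_i$ such that for every $b\in\{\pm1\}^m$ some $h_b\in\mathbb H$ has $b_i(h_b(s_i)-t_i)\ge\gamma$ for all $i$; $\mathrm{fat}_\gamma(\mathbb H)$ is the largest size of a $\gamma$-shattered set. Covering number: $N_\alpha(\mathbb D)$ is the smallest size of a set $\mathbb D_\alpha$ of distributions such that every $\mathcal P\in\mathbb D$ is within total variation distance $\alpha$ of some element of $\mathbb D_\alpha$. *)

theory Defs
  imports "HOL-Probability.Probability"
begin

text \<open>Covariates X in R^d are modelled as functions nat => real restricted to {..<d}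
 (the carrier of a finite product measure), so that d is an ordinary natural-number
 parameter and constants can be universal (independent of d).\<close>

definition cov_base :: "nat \<Rightarrow> ((nat \<Rightarrow> real) \<times> real) measure" where
  "cov_base d = (\<Pi>\<^sub>M i\<in>{..<d}. lborel) \<Otimes>\<^sub>M lborel"

definition obs_base :: "nat \<Rightarrow> ((nat \<Rightarrow> real) \<times> bool \<times> real \<times> real) measure" where
  "obs_base d = (\<Pi>\<^sub>M i\<in>{..<d}. lborel) \<Otimes>\<^sub>M (count_space UNIV \<Otimes>\<^sub>M (lborel \<Otimes>\<^sub>M lborel))"

definition cens_base :: "nat \<Rightarrow> ((nat \<Rightarrow> real) \<times> bool \<times> real) measure" where
  "cens_base d = (\<Pi>\<^sub>M i\<in>{..<d}. lborel) \<Otimes>\<^sub>M (count_space UNIV \<Otimes>\<^sub>M lborel)"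

text \<open>T = 1 is encoded as True, T = 0 as False.\<close>

definition xy_proj :: "bool \<Rightarrow> (nat \<Rightarrow> real) \<times> bool \<times> real \<times> real \<Rightarrow> (nat \<Rightarrow> real) \<times> real" where
  "xy_proj t = (\<lambda>(x, s, y0, y1). (x, if t then y1 else y0))"

definition censor :: "(nat \<Rightarrow> real) \<times> bool \<times> real \<times> real \<Rightarrow> (nat \<Rightarrow> real) \<times> bool \<times> real" where
  "censor = (\<lambda>(x, s, y0, y1). (x, s, if s then y1 else y0))"

definition outcome0 :: "(nat \<Rightarrow> real) \<times> bool \<times> real \<times> real \<Rightarrow> real" where
  "outcome0 = (\<lambda>(x, s, y0, y1). y0)"

definition outcome1 :: "(nat \<Rightarrow> real) \<times> bool \<times> real \<times> real \<Rightarrow> real" where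
  "outcome1 = (\<lambda>(x, s, y0, y1). y1)"

definition marg :: "nat \<Rightarrow> ((nat \<Rightarrow> real) \<times> bool \<times> real \<times> real) measure \<Rightarrow> bool
    \<Rightarrow> ((nat \<Rightarrow> real) \<times> real) measure" where
  "marg d D t = distr D (cov_base d) (xy_proj t)"

text \<open>Observational study: law of (X,T,Y(0),Y(1)) such that both (X,Y(t)) have densities.\<close>
definition obs_study :: "nat \<Rightarrow> ((nat \<Rightarrow> real) \<times> bool \<times> real \<times> real) measure \<Rightarrow> bool" where
  "obs_study d D \<longleftrightarrow> prob_space D \<and> sets D = sets (obs_base d) \<and>
     (\<forall>t. \<exists>f. f \<in> borel_measurable (cov_base d) \<and> marg d D t = density (cov_base d) f)"

definition censored :: "nat \<Rightarrow> ((nat \<Rightarrow> real) \<times> bool \<times> real \<times> real) measure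
    \<Rightarrow> ((nat \<Rightarrow> real) \<times> bool \<times> real) measure" where
  "censored d D = distr D (cens_base d) censor"

definition ate :: "((nat \<Rightarrow> real) \<times> bool \<times> real \<times> real) measure \<Rightarrow> real" where
  "ate D = (\<integral>\<omega>. outcome1 \<omega> - outcome0 \<omega> \<partial>D)"

text \<open>Distributions with densities are represented by their (pointwise) density functions
 with respect to Lebesgue measure on R^d x R.\<close>
definition dens_meas :: "nat \<Rightarrow> ((nat \<Rightarrow> real) \<times> real \<Rightarrow> real) \<Rightarrow> ((nat \<Rightarrow> real) \<times> real) measure" where
  "dens_meas d f = density (cov_base d) (\<lambda>z. ennreal (f z))"

definition is_density :: "nat \<Rightarrow> ((nat \<Rightarrow> real) \<times> real \<Rightarrow> real) \<Rightarrow> bool" where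
  "is_density d f \<longleftrightarrow> f \<in> borel_measurable (cov_base d) \<and>
     (\<forall>z\<in>space (cov_base d). 0 \<le> f z) \<and> prob_space (dens_meas d f)"

text \<open>p is a version of the generalized propensity score p_t(x,y) = Pr[T=t | X=x, Y(t)=y].\<close>
definition is_propensity :: "nat \<Rightarrow> ((nat \<Rightarrow> real) \<times> bool \<times> real \<times> real) measure \<Rightarrow> bool
    \<Rightarrow> ((nat \<Rightarrow> real) \<times> real \<Rightarrow> real) \<Rightarrow> bool" where
  "is_propensity d D t p \<longleftrightarrow> p \<in> borel_measurable (cov_base d) \<and>
     (\<forall>A\<in>sets (cov_base d).
        measure D {\<omega>\<in>space D. fst (snd \<omega>) = t \<and> xy_proj t \<omega> \<in> A}
          = (\<integral>z. indicator A z * p z \<partial>marg d D t))"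

definition realizable :: "nat \<Rightarrow> ((nat \<Rightarrow> real) \<times> real \<Rightarrow> real) set
    \<Rightarrow> ((nat \<Rightarrow> real) \<times> real \<Rightarrow> real) set
    \<Rightarrow> ((nat \<Rightarrow> real) \<times> bool \<times> real \<times> real) measure \<Rightarrow> bool" where
  "realizable d PP DD D \<longleftrightarrow> obs_study d D \<and>
     (\<forall>t. \<exists>p\<in>PP. is_propensity d D t p) \<and>
     (\<forall>t. \<exists>f\<in>DD. marg d D t = dens_meas d f)"

definition P_O :: "nat \<Rightarrow> real \<Rightarrow> ((nat \<Rightarrow> real) \<times> real \<Rightarrow> real) set" where
  "P_O d c = {p. \<forall>z\<in>space (cov_base d). c < p z \<and> p z < 1 - c}"

definition mean_y :: "nat \<Rightarrow> ((nat \<Rightarrow> real) \<times> real \<Rightarrow> real) \<Rightarrow> real" where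
  "mean_y d P = (\<integral>z. snd z * P z \<partial>cov_base d)"

definition condition4 :: "nat \<Rightarrow> ((nat \<Rightarrow> real) \<times> real \<Rightarrow> real) set \<Rightarrow> (real \<Rightarrow> real) \<Rightarrow> real \<Rightarrow> bool" where
  "condition4 d DD M c \<longleftrightarrow> (\<forall>e>0. \<forall>P\<in>DD. \<forall>Q\<in>DD. \<bar>mean_y d P - mean_y d Q\<bar> > e \<longrightarrow>
     (\<exists>S\<in>sets (cov_base d). measure (dens_meas d P) S \<ge> M e / c \<and>
        measure (dens_meas d Q) S \<ge> M e / c \<and>
        (\<forall>z\<in>S. P z / Q z \<notin> {c / (2 * (1 - c)) <..< 2 * (1 - c) / c})))"

definition smooth :: "nat \<Rightarrow> real \<Rightarrow> ((nat \<Rightarrow> real) \<times> real \<Rightarrow> real) \<Rightarrow> ((nat \<Rightarrow> real) \<times> real \<Rightarrow> real) \<Rightarrow> bool" where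
  "smooth d \<sigma> \<mu> P \<longleftrightarrow> (\<forall>z\<in>space (cov_base d). P z \<le> \<mu> z / \<sigma>)"

definition fat_shatters :: "nat \<Rightarrow> real \<Rightarrow> ((nat \<Rightarrow> real) \<times> real \<Rightarrow> real) set
    \<Rightarrow> ((nat \<Rightarrow> real) \<times> real) set \<Rightarrow> bool" where
  "fat_shatters d \<gamma> H S \<longleftrightarrow> S \<subseteq> space (cov_base d) \<and> finite S \<and>
     (\<exists>thr. \<forall>B\<subseteq>S. \<exists>h\<in>H. \<forall>s\<in>S.
        (s \<in> B \<longrightarrow> h s - thr s \<ge> \<gamma>) \<and> (s \<notin> B \<longrightarrow> thr s - h s \<ge> \<gamma>))"

definition fat_finite :: "nat \<Rightarrow> real \<Rightarrow> ((nat \<Rightarrow> real) \<times> real \<Rightarrow> real) set \<Rightarrow> bool" where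
  "fat_finite d \<gamma> H \<longleftrightarrow> bdd_above {card S | S. fat_shatters d \<gamma> H S}"

definition fat :: "nat \<Rightarrow> real \<Rightarrow> ((nat \<Rightarrow> real) \<times> real \<Rightarrow> real) set \<Rightarrow> nat" where
  "fat d \<gamma> H = Sup {card S | S. fat_shatters d \<gamma> H S}"

definition tv_dist :: "'a measure \<Rightarrow> 'a measure \<Rightarrow> real" where
  "tv_dist P Q = (SUP A\<in>sets P. \<bar>measure P A - measure Q A\<bar>)"

definition is_cover :: "nat \<Rightarrow> real \<Rightarrow> ((nat \<Rightarrow> real) \<times> real \<Rightarrow> real) set
    \<Rightarrow> ((nat \<Rightarrow> real) \<times> real) measure set \<Rightarrow> bool" where
  "is_cover d \<alpha> DD C \<longleftrightarrow> finite C \<and>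
     (\<forall>Q\<in>C. prob_space Q \<and> sets Q = sets (cov_base d)) \<and>
     (\<forall>P\<in>DD. \<exists>Q\<in>C. tv_dist (dens_meas d P) Q \<le> \<alpha>)"

definition cover_finite :: "nat \<Rightarrow> real \<Rightarrow> ((nat \<Rightarrow> real) \<times> real \<Rightarrow> real) set \<Rightarrow> bool" where
  "cover_finite d \<alpha> DD \<longleftrightarrow> (\<exists>C. is_cover d \<alpha> DD C)"

definition covering_number :: "nat \<Rightarrow> real \<Rightarrow> ((nat \<Rightarrow> real) \<times> real \<Rightarrow> real) set \<Rightarrow> nat" where
  "covering_number d \<alpha> DD = Inf {card C | C. is_cover d \<alpha> DD C}"

end

theory Submission
  imports Defs
begin

lemma xy_proj_meas[measurable]: "xy_proj t \<in> measurable (obs_base d) (cov_base d)"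
  unfolding xy_proj_def obs_base_def cov_base_def case_prod_beta by measurable

lemma censor_meas[measurable]: "censor \<in> measurable (obs_base d) (cens_base d)"
  unfolding censor_def obs_base_def cens_base_def case_prod_beta by measurable

lemma outcome1_eq: "outcome1 = snd \<circ> xy_proj True"
  by (auto simp: outcome1_def xy_proj_def fun_eq_iff)
lemma outcome0_eq: "outcome0 = snd \<circ> xy_proj False"
  by (auto simp: outcome0_def xy_proj_def fun_eq_iff)

lemma snd_meas[measurable]: "snd \<in> borel_measurable (cov_base d)"
  unfolding cov_base_def by measurable

lemma mean_marg:
  assumes D: "obs_study d D" and f: "is_density d f" and m: "marg d D t = dens_meas d f"
  shows "(\<integral>\<omega>. snd (xy_proj t \<omega>) \<partial>D) = mean_y d f"
proof -
  have sD: "sets D = sets (obs_base d)" using D by (simp add: obs_study_def)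
  have mx: "xy_proj t \<in> measurable D (cov_base d)"
    using measurable_cong_sets[OF sD refl] xy_proj_meas by blast
  have "(\<integral>\<omega>. snd (xy_proj t \<omega>) \<partial>D) = (\<integral>z. snd z \<partial>marg d D t)"
    unfolding marg_def by (subst integral_distr[OF mx]) (auto simp: comp_def)
  also have "\<dots> = (\<integral>z. f z *\<^sub>R snd z \<partial>cov_base d)"
    unfolding m dens_meas_def
    using f unfolding is_density_def
    by (subst integral_density) (auto intro!: AE_I2)
  finally show ?thesis by (simp add: mean_y_def mult.commute)
qed

lemma ate_eq:
  assumes D: "obs_study d D" and f1: "is_density d f1" and m1: "marg d D True = dens_meas d f1"
    and f0: "is_density d f0" and m0: "marg d D False = dens_meas d f0"
    and i0: "integrable D outcome0" and i1: "integrable D outcome1"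
  shows "ate D = mean_y d f1 - mean_y d f0"
proof -
  have "ate D = (\<integral>\<omega>. outcome1 \<omega> \<partial>D) - (\<integral>\<omega>. outcome0 \<omega> \<partial>D)"
    unfolding ate_def using Bochner_Integration.integral_diff[OF i1 i0] by simp
  also have "(\<integral>\<omega>. outcome1 \<omega> \<partial>D) = mean_y d f1"
    using mean_marg[OF D f1 m1] by (simp add: outcome1_eq)
  also have "(\<integral>\<omega>. outcome0 \<omega> \<partial>D) = mean_y d f0"
    using mean_marg[OF D f0 m0] by (simp add: outcome0_eq)
  finally show ?thesis .
qed

definition Pm :: "nat \<Rightarrow> ((nat \<Rightarrow> real) \<times> real \<Rightarrow> real) \<Rightarrow> ((nat \<Rightarrow> real) \<times> real) set \<Rightarrow> real" where
  "Pm d P S = measure (dens_meas d P) S"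

lemma sets_dens[simp]: "sets (dens_meas d P) = sets (cov_base d)"
  by (simp add: dens_meas_def)
lemma space_dens[simp]: "space (dens_meas d P) = space (cov_base d)"
  by (simp add: dens_meas_def)

lemma Pm_nonneg: "0 \<le> Pm d P S" by (simp add: Pm_def)

lemma dens_le:
  assumes P: "is_density d P" and Q: "is_density d Q" and B: "B \<in> sets (cov_base d)"
    and k: "0 \<le> k" and le: "\<And>z. z \<in> B \<Longrightarrow> P z \<le> k * Q z"
  shows "Pm d P B \<le> k * Pm d Q B"
proof -
  interpret PP: prob_space "dens_meas d P" using P by (simp add: is_density_def)
  interpret QQ: prob_space "dens_meas d Q" using Q by (simp add: is_density_def)
  have Pm: "P \<in> borel_measurable (cov_base d)" and Qm: "Q \<in> borel_measurable (cov_base d)"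
    using P Q by (auto simp: is_density_def)
  have "ennreal (Pm d P B) = emeasure (dens_meas d P) B"
    by (simp add: Pm_def PP.emeasure_eq_measure)
  also have "\<dots> = (\<integral>\<^sup>+ z. ennreal (P z) * indicator B z \<partial>cov_base d)"
    unfolding dens_meas_def using Pm B by (subst emeasure_density) auto
  also have "\<dots> \<le> (\<integral>\<^sup>+ z. ennreal k * (ennreal (Q z) * indicator B z) \<partial>cov_base d)"
  proof (intro nn_integral_mono)
    fix z assume "z \<in> space (cov_base d)"
    show "ennreal (P z) * indicator B z \<le> ennreal k * (ennreal (Q z) * indicator B z)"
    proof (cases "z \<in> B")
      case True
      have "ennreal (P z) \<le> ennreal (k * Q z)" using le[OF True] by (rule ennreal_leI)
      also have "\<dots> \<le> ennreal k * ennreal (Q z)"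
        using k by (cases "Q z \<ge> 0") (auto simp: ennreal_mult ennreal_neg[OF mult_nonneg_nonpos])
      finally show ?thesis using True by simp
    qed simp
  qed
  also have "\<dots> = ennreal k * (\<integral>\<^sup>+ z. ennreal (Q z) * indicator B z \<partial>cov_base d)"
    using Qm B by (subst nn_integral_cmult) auto
  also have "(\<integral>\<^sup>+ z. ennreal (Q z) * indicator B z \<partial>cov_base d) = emeasure (dens_meas d Q) B"
    unfolding dens_meas_def using Qm B by (subst emeasure_density) auto
  also have "\<dots> = ennreal (Pm d Q B)"
    by (simp add: Pm_def QQ.emeasure_eq_measure)
  also have "ennreal k * ennreal (Pm d Q B) = ennreal (k * Pm d Q B)"
    using k by (simp add: ennreal_mult Pm_nonneg)
  finally show ?thesis
    using k by (subst (asm) ennreal_le_iff) (auto simp: Pm_nonneg)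
qed

lemma tv_le:
  assumes P: "is_density d P" and Q: "prob_space Q" "sets Q = sets (cov_base d)"
    and tv: "tv_dist (dens_meas d P) Q \<le> a" and S: "S \<in> sets (cov_base d)"
  shows "\<bar>Pm d P S - measure Q S\<bar> \<le> a"
proof -
  interpret PP: prob_space "dens_meas d P" using P by (simp add: is_density_def)
  interpret QQ: prob_space Q by fact
  have "bdd_above ((\<lambda>A. \<bar>measure (dens_meas d P) A - measure Q A\<bar>) ` sets (dens_meas d P))"
  proof (rule bdd_aboveI2[where M=2])
    fix A show "\<bar>measure (dens_meas d P) A - measure Q A\<bar> \<le> 2"
      using PP.prob_le_1[of A] QQ.prob_le_1[of A] measure_nonneg[of "dens_meas d P" A] measure_nonneg[of Q A] unfolding abs_le_iff by linarith
  qed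
  hence "\<bar>measure (dens_meas d P) S - measure Q S\<bar> \<le> tv_dist (dens_meas d P) Q"
    unfolding tv_dist_def using S by (intro cSUP_upper) auto
  thus ?thesis using tv by (simp add: Pm_def)
qed

lemma g_bounds:
  assumes pr: "is_propensity d D t p" and pb: "\<And>z. z \<in> space (cov_base d) \<Longrightarrow> c < p z \<and> p z < 1 - c"
    and m: "marg d D t = dens_meas d f" and f: "is_density d f" and S: "S \<in> sets (cov_base d)"
    and c0: "0 \<le> c"
  shows "c * Pm d f S \<le> measure D {\<omega>\<in>space D. fst (snd \<omega>) = t \<and> xy_proj t \<omega> \<in> S}"
    and "measure D {\<omega>\<in>space D. fst (snd \<omega>) = t \<and> xy_proj t \<omega> \<in> S} \<le> (1 - c) * Pm d f S"
proof -
  interpret PP: prob_space "dens_meas d f" using f by (simp add: is_density_def)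
  have pm: "p \<in> borel_measurable (cov_base d)" using pr by (simp add: is_propensity_def)
  have eq: "measure D {\<omega>\<in>space D. fst (snd \<omega>) = t \<and> xy_proj t \<omega> \<in> S}
      = (\<integral>z. indicator S z * p z \<partial>dens_meas d f)"
    using pr S m by (simp add: is_propensity_def)
  have int1: "integrable (dens_meas d f) (\<lambda>z. indicator S z * p z)"
  proof (rule PP.integrable_const_bound[where B=1])
    show "AE x in dens_meas d f. norm (indicator S x * p x) \<le> 1"
      using pb c0 by (intro AE_I2) (force simp: indicator_def abs_le_iff dest!: pb)
  qed (use pm S in \<open>auto simp: dens_meas_def\<close>)
  have int2: "integrable (dens_meas d f) (\<lambda>z. c * indicator S z)"
    using S PP.emeasure_finite[of S] by (intro integrable_mult_right integrable_real_indicator) (auto simp: less_top[symmetric])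
  have int3: "integrable (dens_meas d f) (\<lambda>z. (1 - c) * indicator S z)"
    using S PP.emeasure_finite[of S] by (intro integrable_mult_right integrable_real_indicator) (auto simp: less_top[symmetric])
  have "(\<integral>z. c * indicator S z \<partial>dens_meas d f) \<le> (\<integral>z. indicator S z * p z \<partial>dens_meas d f)"
    using int1 int2 by (intro integral_mono) (auto simp: indicator_def dest!: pb)
  moreover have "(\<integral>z. c * indicator S z \<partial>dens_meas d f) = c * Pm d f S"
    using S by (simp add: Pm_def)
  ultimately show "c * Pm d f S \<le> measure D {\<omega>\<in>space D. fst (snd \<omega>) = t \<and> xy_proj t \<omega> \<in> S}"
    using eq by linarith
  have "(\<integral>z. indicator S z * p z \<partial>dens_meas d f) \<le> (\<integral>z. (1 - c) * indicator S z \<partial>dens_meas d f)"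
    using int1 int3 by (intro integral_mono) (auto simp: indicator_def dest!: pb)
  moreover have "(\<integral>z. (1 - c) * indicator S z \<partial>dens_meas d f) = (1 - c) * Pm d f S"
    using S by (simp add: Pm_def)
  ultimately show "measure D {\<omega>\<in>space D. fst (snd \<omega>) = t \<and> xy_proj t \<omega> \<in> S} \<le> (1 - c) * Pm d f S"
    using eq by linarith
qed

lemma lin8:
  fixes X Y cJ Fz g h u a :: real
  assumes "4 / 3 * X \<le> cJ" "Fz \<le> X + Y" "g \<le> Fz" "\<bar>h - g\<bar> \<le> u" "cJ - (2 * a + u) \<le> h"
  shows "X \<le> 3 * Y + 3 * (2 * a + 2 * u)"
  using assms unfolding abs_le_iff by argo

lemma arith_core:
  fixes c r a u M FA FB1 FC FB2 FZ IA IC IB1 IB2 JA JC gA gC hA hC FS :: real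
  assumes c0: "0 < c" and c1: "c < 1/2" and r: "r = c / (2 * (1 - c))" and M: "0 < M"
    and a: "a = c * M / 256" and u0: "0 \<le> u" and u1: "u \<le> M / 32"
    and tA: "\<bar>FA - IA\<bar> \<le> 2 * a" and tC: "\<bar>FC - IC\<bar> \<le> 2 * a"
    and tB1: "\<bar>FB1 - IB1\<bar> \<le> 2 * a" and tB2: "\<bar>FB2 - IB2\<bar> \<le> 2 * a"
    and gA: "c * FA \<le> gA" and gC: "gC \<le> (1 - c) * FC"
    and hA: "\<bar>hA - gA\<bar> \<le> u" and hC: "\<bar>hC - gC\<bar> \<le> u"
    and pA: "hA \<le> (1 - c) * JA + (2 * a + u)" and pC: "c * JC - (2 * a + u) \<le> hC"
    and JA: "JA \<le> 3/2 * r * IA" and IC: "IC \<le> 3/2 * r * JC"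
    and B1: "IB1 \<le> 2/3 * FB1" and B2: "FB2 \<le> 2/3 * IB2" and FZ: "FZ \<le> 0"
    and FS: "FS \<le> FA + FB1 + FC + FB2 + FZ" and FSM: "M / c \<le> FS"
  shows False
proof -
  have k1: "(1 - c) * (3/2 * r) = 3 * c / 4" using c1 r by (simp add: field_simps)
  have k2: "4/3 * (1 - c) * (3/2 * r) = c" using c1 r by (simp add: field_simps)
  have s1: "(1 - c) * JA \<le> 3 / 4 * (c * IA)"
  proof -
    have "(1 - c) * JA \<le> (1 - c) * (3/2 * r * IA)" using JA c1 by (intro mult_left_mono) auto
    also have "\<dots> = 3 / 4 * (c * IA)" using k1 by (simp add: mult.assoc[symmetric])
    finally show ?thesis .
  qed
  have s2: "c * IA - 2 * (c * a) \<le> c * FA"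
  proof -
    have "IA - 2 * a \<le> FA" using tA by (simp add: abs_le_iff)
    hence "c * (IA - 2 * a) \<le> c * FA" using c0 by (intro mult_left_mono) auto
    thus ?thesis by (simp add: algebra_simps)
  qed
  have s3: "1 / 4 * (c * IA) \<le> 2 * a + 2 * u + 2 * (c * a)"
    using s1 s2 gA hA pA unfolding abs_le_iff by argo
  have s4: "c * FA \<le> c * IA + 2 * (c * a)"
  proof -
    have "FA \<le> IA + 2 * a" using tA by (simp add: abs_le_iff)
    hence "c * FA \<le> c * (IA + 2 * a)" using c0 by (intro mult_left_mono) auto
    thus ?thesis by (simp add: algebra_simps)
  qed
  have s5: "c * FA \<le> 8 * a + 8 * u + 10 * (c * a)" using s3 s4 by argo
  have s6: "4/3 * (1 - c) * IC \<le> c * JC"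
  proof -
    have "4/3 * (1 - c) * IC \<le> 4/3 * (1 - c) * (3/2 * r * JC)" using IC c1 by (intro mult_left_mono) auto
    also have "\<dots> = c * JC" using k2 by (metis mult.assoc)
    finally show ?thesis .
  qed
  have s7: "(1 - c) * FC \<le> (1 - c) * IC + (1 - c) * (2 * a)"
  proof -
    have "FC \<le> IC + 2 * a" using tC by (simp add: abs_le_iff)
    hence "(1 - c) * FC \<le> (1 - c) * (IC + 2 * a)" using c1 by (intro mult_left_mono) auto
    thus ?thesis by (simp add: distrib_left)
  qed
  have s6': "4/3 * ((1 - c) * IC) \<le> c * JC" using s6 by (metis mult.assoc)
  have s8: "(1 - c) * IC \<le> 3 * ((1 - c) * (2 * a)) + 3 * (2 * a + 2 * u)"
    by (rule lin8[OF s6' s7 gC hC pC])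
  have aM: "a \<ge> 0" unfolding a using c0 M by simp
  have s9: "IC \<le> 6 * a + 12 * a + 12 * u"
  proof -
    have "(1 - c) * IC \<le> (1 - c) * (6 * a) + 3 * (2 * a + 2 * u)" using s8 by (simp add: algebra_simps)
    hence "(1 - c) * (IC - 6 * a) \<le> 3 * (2 * a + 2 * u)" by (simp add: algebra_simps)
    moreover have "1/2 * (IC - 6 * a) \<le> (1 - c) * (IC - 6 * a)" if "IC - 6 * a \<ge> 0"
      using that c1 by (intro mult_right_mono) auto
    ultimately show ?thesis using aM u0 by argo
  qed
  have s10: "c * FC \<le> 1/2 * (26 * a + 12 * u)"
  proof -
    have "FC \<le> 26 * a + 12 * u" using tC s9 by (simp add: abs_le_iff)
    moreover have "0 \<le> 26 * a + 12 * u" using aM u0 by simp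
    ultimately have "c * FC \<le> c * (26 * a + 12 * u)" "c * (26 * a + 12 * u) \<le> 1/2 * (26 * a + 12 * u)"
      using c0 c1 by (intro mult_left_mono mult_right_mono; simp)+
    thus ?thesis by linarith
  qed
  have s11: "FB1 \<le> 6 * a" using tB1 B1 by (simp add: abs_le_iff)
  have s12: "FB2 \<le> 4 * a" using tB2 B2 by (simp add: abs_le_iff)
  have "c * FB1 \<le> c * (6 * a)" "c * (6 * a) \<le> 1/2 * (6 * a)"
    using s11 c0 c1 aM by (intro mult_left_mono mult_right_mono; simp)+
  hence s13: "c * FB1 \<le> 3 * a" by linarith
  have "c * FB2 \<le> c * (4 * a)" "c * (4 * a) \<le> 1/2 * (4 * a)"
    using s12 c0 c1 aM by (intro mult_left_mono mult_right_mono; simp)+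
  hence s14: "c * FB2 \<le> 2 * a" by linarith
  have s15: "c * FZ \<le> 0" using FZ c0 by (simp add: mult_nonneg_nonpos)
  have s16: "M \<le> c * FS"
  proof -
    have "c * (M / c) \<le> c * FS" using FSM c0 by (intro mult_left_mono) auto
    thus ?thesis using c0 by simp
  qed
  have s17: "c * FS \<le> c * FA + c * FB1 + c * FC + c * FB2 + c * FZ"
  proof -
    have "c * FS \<le> c * (FA + FB1 + FC + FB2 + FZ)" using FS c0 by (intro mult_left_mono) auto
    thus ?thesis by (simp add: distrib_left)
  qed
  have "c * a \<le> 1/2 * a" using c1 aM by (intro mult_right_mono) auto
  hence ca: "c * a \<le> a / 2" by simp
  have "M \<le> 8 * a + 8 * u + 10 * (c * a) + 13 * a + 6 * u + 3 * a + 2 * a"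
    using s5 s10 s13 s14 s15 s16 s17 by argo
  also have "\<dots> \<le> 31 * a + 14 * u" using ca by argo
  also have "\<dots> < M"
  proof -
    have "c * M \<le> 1/2 * M" using c1 M by (intro mult_right_mono) auto
    hence "a \<le> M / 512" using a by simp
    thus ?thesis using u1 M by argo
  qed
  finally show False by simp
qed

definition rr :: "real \<Rightarrow> real" where "rr c = c / (2 * (1 - c))"

definition tset :: "nat \<Rightarrow> real \<Rightarrow> ((nat \<Rightarrow> real) \<times> real \<Rightarrow> real) \<Rightarrow> ((nat \<Rightarrow> real) \<times> real \<Rightarrow> real)
   \<Rightarrow> bool \<Rightarrow> ((nat \<Rightarrow> real) \<times> real) set" where
  "tset d c P Q b = (if b then {z \<in> space (cov_base d). P z \<le> 3/2 * rr c * Q z}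
                      else {z \<in> space (cov_base d). Q z \<le> 3/2 * rr c * P z})"

lemma tset_sets:
  assumes "is_density d P" "is_density d Q"
  shows "tset d c P Q b \<in> sets (cov_base d)"
proof -
  have [measurable]: "P \<in> borel_measurable (cov_base d)" "Q \<in> borel_measurable (cov_base d)"
    using assms by (auto simp: is_density_def)
  show ?thesis unfolding tset_def by (cases b) auto
qed

lemma core_meas:
  assumes c0: "0 < c" and c1: "c < 1/2" and e: "0 < \<epsilon>" and Mp: "0 < M (\<epsilon>/2)"
    and cond: "condition4 d DD M c"
    and fD: "f \<in> DD" and PjD: "Pj \<in> DD"
    and f: "is_density d f" and Pj: "is_density d Pj" and Pa: "is_density d Pa"
    and a: "a = c * M (\<epsilon>/2) / 256"
    and tv: "\<And>S. S \<in> sets (cov_base d) \<Longrightarrow> \<bar>Pm d f S - Pm d Pa S\<bar> \<le> 2 * a"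
    and g: "\<And>S. S \<in> sets (cov_base d) \<Longrightarrow> c * Pm d f S \<le> g S \<and> g S \<le> (1 - c) * Pm d f S"
    and u0: "0 \<le> u" and u1: "u \<le> M (\<epsilon>/2) / 32"
    and h: "\<And>b. \<bar>h (tset d c Pj Pa b) - g (tset d c Pj Pa b)\<bar> \<le> u"
    and pass: "\<And>b. c * Pm d Pj (tset d c Pj Pa b) - (2 * a + u) \<le> h (tset d c Pj Pa b) \<and>
                    h (tset d c Pj Pa b) \<le> (1 - c) * Pm d Pj (tset d c Pj Pa b) + (2 * a + u)"
  shows "\<bar>mean_y d Pj - mean_y d f\<bar> \<le> \<epsilon> / 2"
proof (rule ccontr)
  assume "\<not> ?thesis"
  hence gt: "\<bar>mean_y d Pj - mean_y d f\<bar> > \<epsilon> / 2" by simp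
  obtain S where S: "S \<in> sets (cov_base d)" and FSM: "Pm d f S \<ge> M (\<epsilon>/2) / c"
    and rat: "\<And>z. z \<in> S \<Longrightarrow> Pj z / f z \<notin> {c / (2 * (1 - c)) <..< 2 * (1 - c) / c}"
    using cond fD PjD gt e unfolding condition4_def Pm_def
    by (metis half_gt_zero)
  define r where "r = rr c"
  have r: "r = c / (2 * (1 - c))" by (simp add: r_def rr_def)
  have r0: "0 < r" using c0 c1 by (simp add: r)
  have rinv: "2 * (1 - c) / c = 1 / r" by (simp add: r)
  have [measurable]: "f \<in> borel_measurable (cov_base d)" "Pa \<in> borel_measurable (cov_base d)"
      "Pj \<in> borel_measurable (cov_base d)"
    using f Pa Pj by (auto simp: is_density_def)
  define XA where "XA = tset d c Pj Pa True"
  define XC where "XC = tset d c Pj Pa False"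
  define B1 where "B1 = {z \<in> space (cov_base d). Pa z < 2/3 * f z}"
  define B2 where "B2 = {z \<in> space (cov_base d). f z < 2/3 * Pa z}"
  define Z where "Z = {z \<in> space (cov_base d). f z \<le> 0}"
  have XA: "XA \<in> sets (cov_base d)" unfolding XA_def by (rule tset_sets[OF Pj Pa])
  have XC: "XC \<in> sets (cov_base d)" unfolding XC_def by (rule tset_sets[OF Pj Pa])
  have B1: "B1 \<in> sets (cov_base d)" unfolding B1_def by measurable
  have B2: "B2 \<in> sets (cov_base d)" unfolding B2_def by measurable
  have Z: "Z \<in> sets (cov_base d)" unfolding Z_def by measurable
  have sub: "S \<subseteq> XA \<union> B1 \<union> XC \<union> B2 \<union> Z"
  proof
    fix z assume zS: "z \<in> S"
    have zs: "z \<in> space (cov_base d)" using S zS sets.sets_into_space by blast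
    show "z \<in> XA \<union> B1 \<union> XC \<union> B2 \<union> Z"
    proof (cases "f z \<le> 0")
      case True thus ?thesis using zs by (simp add: Z_def)
    next
      case False
      hence fz: "f z > 0" by simp
      have "Pj z / f z \<le> r \<or> Pj z / f z \<ge> 1 / r"
      proof -
        have "Pj z / f z \<notin> {r <..< 1 / r}" using rat[OF zS] unfolding rinv r[symmetric] .
        thus ?thesis by auto
      qed
      thus ?thesis
      proof
        assume "Pj z / f z \<le> r"
        hence q: "Pj z \<le> r * f z" using fz by (simp add: divide_le_eq)
        show ?thesis
        proof (cases "Pa z < 2/3 * f z")
          case True thus ?thesis using zs by (simp add: B1_def)
        next
          case False
          hence "r * f z \<le> r * (3/2 * Pa z)" using r0 by (intro mult_left_mono) auto
          hence "Pj z \<le> 3/2 * rr c * Pa z" using q by (simp add: r_def mult_ac)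
          thus ?thesis using zs by (simp add: XA_def tset_def)
        qed
      next
        assume "Pj z / f z \<ge> 1 / r"
        hence q: "f z \<le> r * Pj z" using fz r0 by (simp add: le_divide_eq field_simps)
        show ?thesis
        proof (cases "f z < 2/3 * Pa z")
          case True thus ?thesis using zs by (simp add: B2_def)
        next
          case False
          hence "Pa z \<le> 3/2 * (r * Pj z)" using q by linarith
          hence "Pa z \<le> 3/2 * rr c * Pj z" by (simp add: r_def mult_ac)
          thus ?thesis using zs by (simp add: XC_def tset_def)
        qed
      qed
    qed
  qed
  interpret FF: prob_space "dens_meas d f" using f by (simp add: is_density_def)
  have FS: "Pm d f S \<le> Pm d f XA + Pm d f B1 + Pm d f XC + Pm d f B2 + Pm d f Z"
  proof -
    have "Pm d f S \<le> Pm d f (XA \<union> B1 \<union> XC \<union> B2 \<union> Z)"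
      unfolding Pm_def using sub XA B1 XC B2 Z by (intro FF.finite_measure_mono) auto
    also have "\<dots> \<le> Pm d f (XA \<union> B1 \<union> XC \<union> B2) + Pm d f Z"
      unfolding Pm_def using XA B1 XC B2 Z by (intro measure_Un_le) auto
    also have "Pm d f (XA \<union> B1 \<union> XC \<union> B2) \<le> Pm d f (XA \<union> B1 \<union> XC) + Pm d f B2"
      unfolding Pm_def using XA B1 XC B2 Z by (intro measure_Un_le) auto
    also have "Pm d f (XA \<union> B1 \<union> XC) \<le> Pm d f (XA \<union> B1) + Pm d f XC"
      unfolding Pm_def using XA B1 XC B2 Z by (intro measure_Un_le) auto
    also have "Pm d f (XA \<union> B1) \<le> Pm d f XA + Pm d f B1"
      unfolding Pm_def using XA B1 XC B2 Z by (intro measure_Un_le) auto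
    finally show ?thesis by simp
  qed
  have JA: "Pm d Pj XA \<le> 3/2 * r * Pm d Pa XA"
    using dens_le[OF Pj Pa XA, of "3/2 * r"] r0 by (auto simp: XA_def tset_def r_def)
  have IC: "Pm d Pa XC \<le> 3/2 * r * Pm d Pj XC"
    using dens_le[OF Pa Pj XC, of "3/2 * r"] r0 by (auto simp: XC_def tset_def r_def)
  have IB1: "Pm d Pa B1 \<le> 2/3 * Pm d f B1"
    using dens_le[OF Pa f B1, of "2/3"] by (auto simp: B1_def)
  have FB2: "Pm d f B2 \<le> 2/3 * Pm d Pa B2"
    using dens_le[OF f Pa B2, of "2/3"] by (auto simp: B2_def)
  have FZ: "Pm d f Z \<le> 0"
    using dens_le[OF f f Z, of 0] by (auto simp: Z_def)
  show False
  proof (rule arith_core[OF c0 c1 r Mp a u0 u1])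
    show "\<bar>Pm d f XA - Pm d Pa XA\<bar> \<le> 2 * a" using tv XA by blast
    show "\<bar>Pm d f XC - Pm d Pa XC\<bar> \<le> 2 * a" using tv XC by blast
    show "\<bar>Pm d f B1 - Pm d Pa B1\<bar> \<le> 2 * a" using tv B1 by blast
    show "\<bar>Pm d f B2 - Pm d Pa B2\<bar> \<le> 2 * a" using tv B2 by blast
    show "c * Pm d f XA \<le> g XA" using g XA by blast
    show "g XC \<le> (1 - c) * Pm d f XC" using g XC by blast
    show "\<bar>h XA - g XA\<bar> \<le> u" using h[of True] by (simp add: XA_def)
    show "\<bar>h XC - g XC\<bar> \<le> u" using h[of False] by (simp add: XC_def)
    show "h XA \<le> (1 - c) * Pm d Pj XA + (2 * a + u)" using pass[of True] by (simp add: XA_def)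
    show "c * Pm d Pj XC - (2 * a + u) \<le> h XC" using pass[of False] by (simp add: XC_def)
  qed (use JA IC IB1 FB2 FZ FS FSM in auto)
qed

definition Gset :: "nat \<Rightarrow> bool \<Rightarrow> ((nat \<Rightarrow> real) \<times> real) set \<Rightarrow> ((nat \<Rightarrow> real) \<times> bool \<times> real) set" where
  "Gset d t S = {w \<in> space (cens_base d). fst (snd w) = t \<and> (fst w, snd (snd w)) \<in> S}"

definition emp :: "nat \<Rightarrow> nat \<Rightarrow> bool \<Rightarrow> ((nat \<Rightarrow> real) \<times> real) set \<Rightarrow> (nat \<Rightarrow> (nat \<Rightarrow> real) \<times> bool \<times> real) \<Rightarrow> real" where
  "emp d n t S \<omega> = (\<Sum>i<n. indicator (Gset d t S) (\<omega> i)) / real n"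

lemma cens_proj_meas[measurable]: "(\<lambda>w. (fst w, snd (snd w))) \<in> measurable (cens_base d) (cov_base d)"
  unfolding cens_base_def cov_base_def by measurable

lemma Gset_sets: assumes S: "S \<in> sets (cov_base d)" shows "Gset d t S \<in> sets (cens_base d)"
proof -
  have [measurable]: "S \<in> sets (cov_base d)" by fact
  have [measurable]: "Measurable.pred (cens_base d) (\<lambda>w. fst (snd w) = t)"
    unfolding cens_base_def by measurable
  show ?thesis unfolding Gset_def by measurable
qed

lemma emp_meas:
  assumes sC: "sets Cm = sets (cens_base d)" and S: "S \<in> sets (cov_base d)"
  shows "emp d n t S \<in> borel_measurable (PiM {..<n} (\<lambda>_. Cm))"
proof -
  have G: "Gset d t S \<in> sets Cm" using Gset_sets[OF S] sC by simp
  have [measurable]: "(\<lambda>\<omega>. \<omega> i) \<in> measurable (PiM {..<n} (\<lambda>_. Cm)) Cm" if "i < n" for i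
    using that by (intro measurable_component_singleton) auto
  have "(\<lambda>\<omega>. indicator (Gset d t S) (\<omega> i) :: real) \<in> borel_measurable (PiM {..<n} (\<lambda>_. Cm))" if "i < n" for i
    using G that by measurable
  thus ?thesis unfolding emp_def[abs_def] by (intro borel_measurable_divide borel_measurable_sum) auto
qed

lemma hoeff:
  assumes Cm: "prob_space Cm" and S: "G \<in> sets Cm" and n: "0 < n" and u: "0 \<le> u"
  shows "measure (PiM {..<n} (\<lambda>_. Cm))
     {\<omega> \<in> space (PiM {..<n} (\<lambda>_. Cm)). \<bar>(\<Sum>i<n. indicator G (\<omega> i)) / real n - measure Cm G\<bar> \<ge> u}
     \<le> 2 * exp (- 2 * real n * u\<^sup>2)"
proof -
  let ?P = "PiM {..<n} (\<lambda>_. Cm)"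
  interpret C: prob_space Cm by fact
  interpret P: prob_space ?P by (intro prob_space_PiM) (use Cm in auto)
  have rv: "(\<lambda>\<omega>. \<omega> i) \<in> measurable ?P Cm" if "i \<in> {..<n}" for i
    using that by (intro measurable_component_singleton) auto
  have dist: "distr ?P Cm (\<lambda>\<omega>. \<omega> i) = Cm" if "i \<in> {..<n}" for i
    using that Cm by (intro distr_PiM_component) auto
  have ind: "P.indep_vars (\<lambda>_. Cm) (\<lambda>i \<omega>. \<omega> i) {..<n}"
  proof (subst P.indep_vars_iff_distr_eq_PiM')
    show "{..<n} \<noteq> {}" using n by auto
    show "distr ?P (PiM {..<n} (\<lambda>_. Cm)) (\<lambda>x. \<lambda>i\<in>{..<n}. x i) = PiM {..<n} (\<lambda>i. distr ?P Cm (\<lambda>\<omega>. \<omega> i))"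
    proof -
      have "distr ?P ?P (\<lambda>x. \<lambda>i\<in>{..<n}. x i) = distr ?P ?P (\<lambda>x. x)"
        by (intro distr_cong) (auto simp: space_PiM)
      also have "\<dots> = ?P" by simp
      also have "\<dots> = PiM {..<n} (\<lambda>i. distr ?P Cm (\<lambda>\<omega>. \<omega> i))"
        by (intro PiM_cong) (auto simp: dist)
      finally show ?thesis .
    qed
  qed (use rv in auto)
  define X where "X = (\<lambda>i (\<omega>::nat \<Rightarrow> _). indicator G (\<omega> i) :: real)"
  have indX: "P.indep_vars (\<lambda>_. borel) X {..<n}"
    unfolding X_def using S
    by (intro P.indep_vars_compose2[OF ind, of "\<lambda>_. indicator G"]) auto
  have EX: "P.expectation (X i) = measure Cm G" if "i \<in> {..<n}" for i
  proof -
    have "P.expectation (X i) = (\<integral>x. indicator G x \<partial>distr ?P Cm (\<lambda>\<omega>. \<omega> i))"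
      unfolding X_def using rv[OF that] S by (subst integral_distr) auto
    also have "\<dots> = measure Cm G" using dist[OF that] S by simp
    finally show ?thesis .
  qed
  interpret H: Hoeffding_ineq ?P "{..<n}" X "\<lambda>_. 0" "\<lambda>_. 1" "real n * measure Cm G"
  proof unfold_locales
    show "AE x in ?P. X i x \<in> {0..1}" if "i \<in> {..<n}" for i
      by (intro AE_I2) (auto simp: X_def indicator_def)
    show "real n * measure Cm G \<equiv> \<Sum>i<n. P.expectation (X i)"
      using EX by simp
  qed (use indX in auto)
  have "P.prob {\<omega> \<in> space ?P. \<bar>(\<Sum>i\<in>{..<n}. X i \<omega>) - real n * measure Cm G\<bar> \<ge> real n * u}
        \<le> 2 * exp (- 2 * (real n * u)\<^sup>2 / (\<Sum>i\<in>{..<n}. (1 - 0)\<^sup>2))"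
    using n u by (intro H.Hoeffding_ineq_abs_ge) auto
  also have "(- 2 * (real n * u)\<^sup>2 / (\<Sum>i\<in>{..<n}. (1 - 0)\<^sup>2)) = - 2 * real n * u\<^sup>2"
    using n by (simp add: power2_eq_square)
  also have "{\<omega> \<in> space ?P. \<bar>(\<Sum>i\<in>{..<n}. X i \<omega>) - real n * measure Cm G\<bar> \<ge> real n * u}
     = {\<omega> \<in> space ?P. \<bar>(\<Sum>i<n. indicator G (\<omega> i)) / real n - measure Cm G\<bar> \<ge> u}"
  proof -
    have "\<bar>s - real n * m\<bar> \<ge> real n * u \<longleftrightarrow> \<bar>s / real n - m\<bar> \<ge> u" for s m
    proof -
      have "s - real n * m = real n * (s / real n - m)" using n by (simp add: field_simps)
      hence "\<bar>s - real n * m\<bar> = real n * \<bar>s / real n - m\<bar>" by (simp add: abs_mult)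
      thus ?thesis using n by simp
    qed
    thus ?thesis by (simp add: X_def)
  qed
  finally show ?thesis .
qed

definition sl :: "real \<Rightarrow> (real \<Rightarrow> real) \<Rightarrow> real \<Rightarrow> real" where
  "sl c M \<epsilon> = 2 * (c * M (\<epsilon>/2) / 256) + M (\<epsilon>/2) / 32"

definition passes where
  "passes d c \<epsilon> M R n t P \<omega> \<longleftrightarrow> (\<forall>Q\<in>R. \<forall>b.
     c * Pm d P (tset d c P Q b) - sl c M \<epsilon> \<le> emp d n t (tset d c P Q b) \<omega> \<and>
     emp d n t (tset d c P Q b) \<omega> \<le> (1 - c) * Pm d P (tset d c P Q b) + sl c M \<epsilon>)"

definition est where
  "est d c \<epsilon> M R xs n t \<omega> = (if length xs \<le> 1 then mean_y d (xs ! 0)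
     else mean_y d (xs ! (LEAST k. k < length xs \<and> passes d c \<epsilon> M R n t (xs ! k) \<omega>)))"

definition alg where
  "alg d c \<epsilon> M R xs n \<omega> = est d c \<epsilon> M R xs n True \<omega> - est d c \<epsilon> M R xs n False \<omega>"

lemma passes_pred:
  assumes sC: "sets Cm = sets (cens_base d)" and R: "finite R" "\<forall>Q\<in>R. is_density d Q"
    and P: "is_density d P"
  shows "Measurable.pred (PiM {..<n} (\<lambda>_. Cm)) (passes d c \<epsilon> M R n t P)"
proof -
  have [measurable]: "emp d n t (tset d c P Q b) \<in> borel_measurable (PiM {..<n} (\<lambda>_. Cm))" if "Q \<in> R" for Q b
    using emp_meas[OF sC tset_sets[OF P]] that R by blast
  show ?thesis unfolding passes_def[abs_def]
    using R(1) by measurable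
qed

lemma alg_meas:
  assumes sC: "sets Cm = sets (cens_base d)" and R: "finite R" "\<forall>Q\<in>R. is_density d Q"
    and xs: "set xs = R"
  shows "alg d c \<epsilon> M R xs n \<in> borel_measurable (PiM {..<n} (\<lambda>_. Cm))"
proof -
  have est: "est d c \<epsilon> M R xs n t \<in> borel_measurable (PiM {..<n} (\<lambda>_. Cm))" for t
  proof (cases "length xs \<le> 1")
    case True
    hence "est d c \<epsilon> M R xs n t = (\<lambda>\<omega>. mean_y d (xs ! 0))" by (intro ext) (simp add: est_def)
    thus ?thesis using measurable_const[of "mean_y d (xs ! 0)" borel "PiM {..<n} (\<lambda>_. Cm)"] by (simp only: space_borel UNIV_I)
  next
    case False
    have pr: "Measurable.pred (PiM {..<n} (\<lambda>_. Cm)) (\<lambda>\<omega>. k < length xs \<and> passes d c \<epsilon> M R n t (xs ! k) \<omega>)" for k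
    proof (cases "k < length xs")
      case True
      hence "xs ! k \<in> R" using xs nth_mem by blast
      hence "Measurable.pred (PiM {..<n} (\<lambda>_. Cm)) (passes d c \<epsilon> M R n t (xs ! k))"
        using R by (intro passes_pred[OF sC R]) auto
      thus ?thesis using True by simp
    qed simp
    have L: "(\<lambda>\<omega>. LEAST k. k < length xs \<and> passes d c \<epsilon> M R n t (xs ! k) \<omega>) \<in> measurable (PiM {..<n} (\<lambda>_. Cm)) (count_space UNIV)"
      by (intro measurable_Least pr)
    have "(\<lambda>\<omega>. mean_y d (xs ! (LEAST k. k < length xs \<and> passes d c \<epsilon> M R n t (xs ! k) \<omega>))) \<in> borel_measurable (PiM {..<n} (\<lambda>_. Cm))"
      by (rule measurable_compose[OF L, of "\<lambda>k. mean_y d (xs ! k)" borel]) (rule borel_measurable_count_space)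
    moreover have "est d c \<epsilon> M R xs n t = (\<lambda>\<omega>. mean_y d (xs ! (LEAST k. k < length xs \<and> passes d c \<epsilon> M R n t (xs ! k) \<omega>)))"
      using False by (intro ext) (simp add: est_def)
    ultimately show ?thesis by (simp only:)
  qed
  have "alg d c \<epsilon> M R xs n = (\<lambda>\<omega>. est d c \<epsilon> M R xs n True \<omega> - est d c \<epsilon> M R xs n False \<omega>)"
    by (intro ext) (simp add: alg_def)
  thus ?thesis using borel_measurable_diff[OF est[of True] est[of False]] by (simp only:)
qed

lemma cens_facts:
  assumes D: "obs_study d D"
  shows "prob_space (censored d D)" "sets (censored d D) = sets (cens_base d)"
    and "\<And>S. S \<in> sets (cov_base d) \<Longrightarrow> measure (censored d D) (Gset d t S)
            = measure D {\<omega>\<in>space D. fst (snd \<omega>) = t \<and> xy_proj t \<omega> \<in> S}"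
proof -
  have sD: "sets D = sets (obs_base d)" and pD: "prob_space D" using D by (auto simp: obs_study_def)
  have mc: "censor \<in> measurable D (cens_base d)"
    using measurable_cong_sets[OF sD refl] censor_meas by blast
  show "prob_space (censored d D)" unfolding censored_def using pD mc by (intro prob_space.prob_space_distr) auto
  show "sets (censored d D) = sets (cens_base d)" by (simp add: censored_def)
  fix S assume S: "S \<in> sets (cov_base d)"
  have "measure (censored d D) (Gset d t S) = measure D (censor -` Gset d t S \<inter> space D)"
    unfolding censored_def using mc Gset_sets[OF S] by (rule measure_distr)
  also have "censor -` Gset d t S \<inter> space D = {\<omega>\<in>space D. fst (snd \<omega>) = t \<and> xy_proj t \<omega> \<in> S}"
  proof -
    have "censor \<omega> \<in> Gset d t S \<longleftrightarrow> (fst (snd \<omega>) = t \<and> xy_proj t \<omega> \<in> S)" if "\<omega> \<in> space D" for \<omega>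
      using measurable_space[OF mc that]
      by (cases \<omega>) (auto simp: Gset_def censor_def xy_proj_def)
    thus ?thesis by blast
  qed
  finally show "measure (censored d D) (Gset d t S) = measure D {\<omega>\<in>space D. fst (snd \<omega>) = t \<and> xy_proj t \<omega> \<in> S}" .
qed

lemma pass_arith:
  fixes c F I g h u a :: real
  assumes "0 \<le> c" "c \<le> 1" "\<bar>F - I\<bar> \<le> 2 * a" "0 \<le> a" "c * F \<le> g" "g \<le> (1 - c) * F" "\<bar>h - g\<bar> \<le> u"
  shows "c * I - (2 * a + u) \<le> h \<and> h \<le> (1 - c) * I + (2 * a + u)"
proof -
  have "c * (I - 2 * a) \<le> c * F" using assms by (intro mult_left_mono) auto
  moreover have "(1 - c) * F \<le> (1 - c) * (I + 2 * a)" using assms by (intro mult_left_mono) auto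
  moreover have "c * (2 * a) \<le> 2 * a" "(1 - c) * (2 * a) \<le> 2 * a" using assms
    by (intro mult_left_le_one_le; simp)+
  ultimately show ?thesis using assms unfolding abs_le_iff by (simp add: algebra_simps)
qed

lemma per_t:
  assumes c0: "0 < c" and c1: "c < 1/2" and e: "0 < \<epsilon>" and Mp: "0 < M (\<epsilon>/2)"
    and cond: "condition4 d DD M c" and DDd: "\<forall>f\<in>DD. is_density d f"
    and RD: "R \<subseteq> DD" and F: "F \<in> DD" and I: "I \<in> R"
    and tv0: "\<forall>S\<in>sets (cov_base d). \<bar>Pm d F S - Pm d I S\<bar> \<le> 2 * (c * M (\<epsilon>/2) / 256)"
    and g0: "\<forall>S\<in>sets (cov_base d). c * Pm d F S \<le> g S \<and> g S \<le> (1 - c) * Pm d F S"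
    and u0: "0 \<le> u" and u1: "u \<le> M (\<epsilon>/2) / 32"
    and good0: "\<forall>P\<in>R. \<forall>Q\<in>R. \<forall>b. \<bar>h (tset d c P Q b) - g (tset d c P Q b)\<bar> \<le> u"
  shows "\<forall>Q\<in>R. \<forall>b. c * Pm d I (tset d c I Q b) - (2 * (c * M (\<epsilon>/2) / 256) + u) \<le> h (tset d c I Q b) \<and>
           h (tset d c I Q b) \<le> (1 - c) * Pm d I (tset d c I Q b) + (2 * (c * M (\<epsilon>/2) / 256) + u)"
    and "\<And>P. P \<in> R \<Longrightarrow> (\<forall>Q\<in>R. \<forall>b. c * Pm d P (tset d c P Q b) - (2 * (c * M (\<epsilon>/2) / 256) + u) \<le> h (tset d c P Q b) \<and>
           h (tset d c P Q b) \<le> (1 - c) * Pm d P (tset d c P Q b) + (2 * (c * M (\<epsilon>/2) / 256) + u))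
         \<Longrightarrow> \<bar>mean_y d P - mean_y d F\<bar> \<le> \<epsilon> / 2"
proof -
  have tv: "\<And>S. S \<in> sets (cov_base d) \<Longrightarrow> \<bar>Pm d F S - Pm d I S\<bar> \<le> 2 * (c * M (\<epsilon>/2) / 256)"
    using tv0 by blast
  have g: "\<And>S. S \<in> sets (cov_base d) \<Longrightarrow> c * Pm d F S \<le> g S \<and> g S \<le> (1 - c) * Pm d F S"
    using g0 by blast
  have good: "\<And>P Q b. P \<in> R \<Longrightarrow> Q \<in> R \<Longrightarrow> \<bar>h (tset d c P Q b) - g (tset d c P Q b)\<bar> \<le> u"
    using good0 by blast
  have Id: "is_density d I" using I RD DDd by auto
  have a0: "0 \<le> c * M (\<epsilon>/2) / 256" using c0 Mp by simp
  show "\<forall>Q\<in>R. \<forall>b. c * Pm d I (tset d c I Q b) - (2 * (c * M (\<epsilon>/2) / 256) + u) \<le> h (tset d c I Q b) \<and>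
           h (tset d c I Q b) \<le> (1 - c) * Pm d I (tset d c I Q b) + (2 * (c * M (\<epsilon>/2) / 256) + u)"
  proof (intro ballI allI)
    fix Q b assume Q: "Q \<in> R"
    have Qd: "is_density d Q" using Q RD DDd by auto
    have X: "tset d c I Q b \<in> sets (cov_base d)" by (rule tset_sets[OF Id Qd])
    show "c * Pm d I (tset d c I Q b) - (2 * (c * M (\<epsilon>/2) / 256) + u) \<le> h (tset d c I Q b) \<and>
           h (tset d c I Q b) \<le> (1 - c) * Pm d I (tset d c I Q b) + (2 * (c * M (\<epsilon>/2) / 256) + u)"
      using c0 c1 tv[OF X] a0 g[OF X] good[OF I Q] by (intro pass_arith) auto
  qed
  fix P assume P: "P \<in> R" and pass: "\<forall>Q\<in>R. \<forall>b. c * Pm d P (tset d c P Q b) - (2 * (c * M (\<epsilon>/2) / 256) + u) \<le> h (tset d c P Q b) \<and>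
           h (tset d c P Q b) \<le> (1 - c) * Pm d P (tset d c P Q b) + (2 * (c * M (\<epsilon>/2) / 256) + u)"
  have Pd: "is_density d P" using P RD DDd by auto
  have Fd: "is_density d F" using F DDd by auto
  show "\<bar>mean_y d P - mean_y d F\<bar> \<le> \<epsilon> / 2"
  proof (rule core_meas[OF c0 c1 e Mp cond F _ Fd Pd Id refl tv g u0 u1])
    show "P \<in> DD" using P RD by auto
    show "\<bar>h (tset d c P I b) - g (tset d c P I b)\<bar> \<le> u" for b using good[OF P I] .
    show "c * Pm d P (tset d c P I b) - (2 * (c * M (\<epsilon> / 2) / 256) + u) \<le> h (tset d c P I b) \<and>
          h (tset d c P I b) \<le> (1 - c) * Pm d P (tset d c P I b) + (2 * (c * M (\<epsilon> / 2) / 256) + u)" for b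
      using pass I by blast
  qed (auto)
qed

lemma alg_correct:
  assumes c0: "0 < c" and c1: "c < 1/2" and e: "0 < \<epsilon>" and d0: "0 < \<delta>" and Mp: "0 < M (\<epsilon>/2)"
    and cond: "condition4 d DD M c" and PPs: "PP \<subseteq> P_O d c" and DDd: "\<forall>f\<in>DD. is_density d f"
    and RD: "R \<subseteq> DD" and fin: "finite R" and xs: "set xs = R"
    and repr: "\<forall>f\<in>DD. \<exists>P\<in>R. \<forall>S\<in>sets (cov_base d). \<bar>Pm d f S - Pm d P S\<bar> \<le> 2 * (c * M (\<epsilon>/2) / 256)"
    and nb: "length xs \<ge> 2 \<Longrightarrow> 0 < n \<and> 8 * real (card R)^2 * exp (- 2 * real n * (M (\<epsilon>/2) / 32)\<^sup>2) \<le> \<delta>"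
    and rl: "realizable d PP DD D" and i0: "integrable D outcome0" and i1: "integrable D outcome1"
  shows "measure (\<Pi>\<^sub>M i\<in>{..<n}. censored d D)
           {\<omega> \<in> space (\<Pi>\<^sub>M i\<in>{..<n}. censored d D). \<bar>alg d c \<epsilon> M R xs n \<omega> - ate D\<bar> \<le> \<epsilon>} \<ge> 1 - \<delta>"
proof -
  have obs: "obs_study d D" using rl by (simp add: realizable_def)
  define Cm where "Cm = censored d D"
  note cf = cens_facts[OF obs]
  have pC: "prob_space Cm" and sC: "sets Cm = sets (cens_base d)" using cf by (auto simp: Cm_def)
  define PS where "PS = PiM {..<n} (\<lambda>_. Cm)"
  interpret P: prob_space PS unfolding PS_def by (intro prob_space_PiM) (use pC in auto)
  obtain F where F: "\<And>t. F t \<in> DD \<and> marg d D t = dens_meas d (F t)"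
    using rl unfolding realizable_def by metis
  obtain p where p: "\<And>t. p t \<in> PP \<and> is_propensity d D t (p t)"
    using rl unfolding realizable_def by metis
  have Fd: "is_density d (F t)" for t using F DDd by auto
  have pb: "c < p t z \<and> p t z < 1 - c" if "z \<in> space (cov_base d)" for t z
    using p[of t] PPs that by (auto simp: P_O_def)
  define g where "g t S = measure Cm (Gset d t S)" for t S
  have gb: "c * Pm d (F t) S \<le> g t S \<and> g t S \<le> (1 - c) * Pm d (F t) S" if S: "S \<in> sets (cov_base d)" for t S
  proof -
    have "g t S = measure D {\<omega>\<in>space D. fst (snd \<omega>) = t \<and> xy_proj t \<omega> \<in> S}"
      unfolding g_def Cm_def using cf(3)[OF S] .
    thus ?thesis using g_bounds[OF conjunct2[OF p[of t]] pb conjunct2[OF F[of t]] Fd S] c0 by simp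
  qed
  have "\<forall>t. \<exists>P. P \<in> R \<and> (\<forall>S\<in>sets (cov_base d). \<bar>Pm d (F t) S - Pm d P S\<bar> \<le> 2 * (c * M (\<epsilon>/2) / 256))"
    using repr F by blast
  then obtain I where I: "\<And>t. I t \<in> R \<and> (\<forall>S\<in>sets (cov_base d). \<bar>Pm d (F t) S - Pm d (I t) S\<bar> \<le> 2 * (c * M (\<epsilon>/2) / 256))"
    by metis
  have ate: "ate D = mean_y d (F True) - mean_y d (F False)"
    using ate_eq[OF obs Fd conjunct2[OF F[of True]] Fd conjunct2[OF F[of False]] i0 i1] .
  define E where "E = {\<omega> \<in> space PS. \<bar>alg d c \<epsilon> M R xs n \<omega> - ate D\<bar> \<le> \<epsilon>}"
  have fin_eps: "\<bar>m1 - mean_y d (F True)\<bar> \<le> \<epsilon>/2 \<Longrightarrow> \<bar>m0 - mean_y d (F False)\<bar> \<le> \<epsilon>/2 \<Longrightarrow>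
      \<bar>(m1 - m0) - ate D\<bar> \<le> \<epsilon>" for m1 m0
    unfolding ate by linarith
  show ?thesis
  proof (cases "length xs \<le> 1")
    case True
    have "xs \<noteq> []" using I[of True] xs by auto
    hence R1: "R = {xs ! 0}" using True xs by (cases xs) auto
    have close: "\<bar>mean_y d (xs ! 0) - mean_y d (F t)\<bar> \<le> \<epsilon>/2" for t
    proof -
      have It: "I t = xs ! 0" using I[of t] R1 by auto
      have tvt: "\<forall>S\<in>sets (cov_base d). \<bar>Pm d (F t) S - Pm d (I t) S\<bar> \<le> 2 * (c * M (\<epsilon>/2) / 256)"
        using I[of t] by blast
      have gt: "\<forall>S\<in>sets (cov_base d). c * Pm d (F t) S \<le> g t S \<and> g t S \<le> (1 - c) * Pm d (F t) S"
        using gb by blast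
      have u1: "(0::real) \<le> M (\<epsilon>/2) / 32" using Mp by simp
      have goodt: "\<forall>P\<in>R. \<forall>Q\<in>R. \<forall>b. \<bar>g t (tset d c P Q b) - g t (tset d c P Q b)\<bar> \<le> 0"
        by simp
      note pt = per_t[where g="g t" and u=0 and h="g t", OF c0 c1 e Mp cond DDd RD conjunct1[OF F[of t]] conjunct1[OF I[of t]]
          tvt gt order.refl u1 goodt]
      have "\<bar>mean_y d (I t) - mean_y d (F t)\<bar> \<le> \<epsilon>/2"
        using pt(2)[OF conjunct1[OF I[of t]] pt(1)] .
      thus ?thesis using It by simp
    qed
    have "E = space PS"
    proof -
      have "alg d c \<epsilon> M R xs n \<omega> = mean_y d (xs ! 0) - mean_y d (xs ! 0)" for \<omega>
        using True by (simp add: alg_def est_def)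
      thus ?thesis unfolding E_def using fin_eps[OF close close] by auto
    qed
    thus ?thesis using P.prob_space d0 by (simp add: E_def[symmetric] PS_def[symmetric] Cm_def[symmetric])
  next
    case False
    hence n0: "0 < n" and nb': "8 * real (card R)^2 * exp (- 2 * real n * (M (\<epsilon>/2) / 32)\<^sup>2) \<le> \<delta>"
      using nb by auto
    define u where "u = M (\<epsilon>/2) / 32"
    have u0: "0 \<le> u" using Mp by (simp add: u_def)
    define J where "J = (UNIV :: bool set) \<times> R \<times> R \<times> (UNIV :: bool set)"
    define Bad where "Bad = (\<lambda>(t, P, Q, b). {\<omega> \<in> space PS. \<bar>emp d n t (tset d c P Q b) \<omega> - g t (tset d c P Q b)\<bar> \<ge> u})"
    have Xs: "tset d c P Q b \<in> sets (cov_base d)" if "P \<in> R" "Q \<in> R" for P Q b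
      using that RD DDd by (intro tset_sets) auto
    have Bad_sets: "Bad j \<in> sets PS" if jJ: "j \<in> J" for j
    proof -
      obtain t P Q b where j: "j = (t, P, Q, b)" and PQ: "P \<in> R" "Q \<in> R" using jJ unfolding J_def by (cases j) auto
      have [measurable]: "emp d n t (tset d c P Q b) \<in> borel_measurable PS"
        unfolding PS_def by (rule emp_meas[OF sC Xs[OF PQ]])
      show ?thesis unfolding Bad_def j prod.case by measurable
    qed
    have Bad_le: "measure PS (Bad j) \<le> 2 * exp (- 2 * real n * u\<^sup>2)" if jJ: "j \<in> J" for j
    proof -
      obtain t P Q b where j: "j = (t, P, Q, b)" and PQ: "P \<in> R" "Q \<in> R" using jJ unfolding J_def by (cases j) auto
      have G: "Gset d t (tset d c P Q b) \<in> sets Cm" using Gset_sets[OF Xs[OF PQ]] sC by simp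
      show ?thesis unfolding Bad_def j prod.case PS_def using hoeff[OF pC G n0 u0]
        by (simp add: emp_def g_def)
    qed
    have Esets: "E \<in> sets PS"
    proof -
      have [measurable]: "alg d c \<epsilon> M R xs n \<in> borel_measurable PS"
        unfolding PS_def using fin RD DDd xs by (intro alg_meas[OF sC]) auto
      show ?thesis unfolding E_def by measurable
    qed
    have sub: "space PS - E \<subseteq> (\<Union>j\<in>J. Bad j)"
    proof
      fix \<omega> assume om: "\<omega> \<in> space PS - E"
      show "\<omega> \<in> (\<Union>j\<in>J. Bad j)"
      proof (rule ccontr)
        assume nb: "\<omega> \<notin> (\<Union>j\<in>J. Bad j)"
        have good: "\<bar>emp d n t (tset d c P Q b) \<omega> - g t (tset d c P Q b)\<bar> \<le> u" if "P \<in> R" "Q \<in> R" for t P Q b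
        proof -
          have "\<omega> \<notin> Bad (t, P, Q, b)" using nb that by (auto simp: J_def)
          thus ?thesis using om by (auto simp: Bad_def)
        qed
        have close: "\<bar>est d c \<epsilon> M R xs n t \<omega> - mean_y d (F t)\<bar> \<le> \<epsilon>/2" for t
        proof -
          have tvt: "\<forall>S\<in>sets (cov_base d). \<bar>Pm d (F t) S - Pm d (I t) S\<bar> \<le> 2 * (c * M (\<epsilon>/2) / 256)"
            using I[of t] by blast
          have gt: "\<forall>S\<in>sets (cov_base d). c * Pm d (F t) S \<le> g t S \<and> g t S \<le> (1 - c) * Pm d (F t) S"
            using gb by blast
          have u1: "u \<le> M (\<epsilon>/2) / 32" by (simp add: u_def)
          have goodt: "\<forall>P\<in>R. \<forall>Q\<in>R. \<forall>b. \<bar>emp d n t (tset d c P Q b) \<omega> - g t (tset d c P Q b)\<bar> \<le> u"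
            using good by blast
          note pt = per_t[where g="g t" and u=u and h="\<lambda>X. emp d n t X \<omega>", OF c0 c1 e Mp cond DDd RD conjunct1[OF F[of t]] conjunct1[OF I[of t]]
              tvt gt u0 u1 goodt]
          have sl: "sl c M \<epsilon> = 2 * (c * M (\<epsilon>/2) / 256) + u" by (simp add: sl_def u_def)
          have Ipass: "passes d c \<epsilon> M R n t (I t) \<omega>"
            using pt(1) unfolding passes_def sl by blast
          obtain k0 where k0: "k0 < length xs" "xs ! k0 = I t"
            using I[of t] xs by (metis in_set_conv_nth)
          define k where "k = (LEAST k. k < length xs \<and> passes d c \<epsilon> M R n t (xs ! k) \<omega>)"
          have k: "k < length xs \<and> passes d c \<epsilon> M R n t (xs ! k) \<omega>"
            unfolding k_def by (rule LeastI[of _ k0]) (use k0 Ipass in auto)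
          have kR: "xs ! k \<in> R" using k xs nth_mem by blast
          have "\<bar>mean_y d (xs ! k) - mean_y d (F t)\<bar> \<le> \<epsilon>/2"
            using pt(2)[OF kR] k unfolding passes_def sl by blast
          thus ?thesis using False by (simp add: est_def k_def)
        qed
        have "\<bar>alg d c \<epsilon> M R xs n \<omega> - ate D\<bar> \<le> \<epsilon>"
          unfolding alg_def by (rule fin_eps[OF close close])
        thus False using om by (simp add: E_def)
      qed
    qed
    have finJ: "finite J" using fin by (simp add: J_def)
    have cardJ: "card J = 4 * card R ^ 2" by (simp add: J_def card_cartesian_product power2_eq_square)
    have "P.prob (space PS - E) \<le> P.prob (\<Union>j\<in>J. Bad j)"
      using sub Bad_sets finJ by (intro P.finite_measure_mono) auto
    also have "\<dots> \<le> (\<Sum>j\<in>J. P.prob (Bad j))"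
      using finJ Bad_sets by (intro measure_UNION_le) auto
    also have "\<dots> \<le> real (card J) * (2 * exp (- 2 * real n * u\<^sup>2))"
      using Bad_le by (intro sum_bounded_above) auto
    also have "\<dots> \<le> \<delta>" using nb' by (simp add: cardJ u_def)
    finally have "P.prob (space PS - E) \<le> \<delta>" .
    moreover have "P.prob (space PS - E) = 1 - P.prob E" using Esets by (rule P.prob_compl)
    ultimately have "1 - \<delta> \<le> P.prob E" by simp
    thus ?thesis by (simp add: E_def PS_def Cm_def)
  qed
qed

lemma n_arith:
  fixes N Rc n :: nat and m \<delta> fl :: real
  assumes R2: "2 \<le> Rc" and RN: "Rc \<le> N" and d0: "0 < \<delta>" and d1: "\<delta> < 1" and m: "0 < m"
    and fl: "0 \<le> fl" and nb: "real n \<ge> 10 * (1 / ((1/256) * m^2)) * (fl + ln (real N / \<delta>))"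
  shows "0 < n \<and> 8 * real Rc ^ 2 * exp (- 2 * real n * (m / 32)\<^sup>2) \<le> \<delta>"
proof -
  have N2: "2 \<le> real N" using R2 RN by linarith
  have lnR: "ln (real Rc) \<le> ln (real N)" using R2 RN by simp
  have ln2: "0 < ln (2::real)" by simp
  have ln2N: "ln 2 \<le> ln (real N)" using N2 by simp
  have lnd: "ln \<delta> < 0" using d0 d1 by simp
  have lnNd: "ln (real N / \<delta>) = ln (real N) - ln \<delta>" using N2 d0 by (simp add: ln_div)
  have pos: "0 < ln (real N / \<delta>)" using lnNd ln2 ln2N lnd by linarith
  have c10: "10 * (1 / ((1/256) * m^2)) = 2560 / m^2" by simp
  have "2560 / m^2 * ln (real N / \<delta>) \<le> 2560 / m^2 * (fl + ln (real N / \<delta>))"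
    using fl m by (intro mult_left_mono) auto
  hence nb2: "2560 / m^2 * ln (real N / \<delta>) \<le> real n" using nb[unfolded c10] by linarith
  have "0 < 2560 / m^2 * ln (real N / \<delta>)" using pos m by simp
  hence n0: "0 < n" using nb2 by linarith
  have "2560 * ln (real N / \<delta>) \<le> real n * m^2"
    using nb2 m by (simp add: field_simps)
  hence key: "ln 8 + 2 * ln (real Rc) - ln \<delta> \<le> real n * m^2 / 512"
  proof -
    assume h: "2560 * ln (real N / \<delta>) \<le> real n * m^2"
    have l8: "ln (8::real) = 3 * ln 2"
    proof -
      have "(8::real) = 2 ^ 3" by simp
      hence "ln (8::real) = ln (2 ^ 3)" by simp
      also have "\<dots> = 3 * ln 2" by (subst ln_realpow) auto
      finally show ?thesis .
    qed
    show ?thesis using h lnNd l8 lnR ln2N lnd by linarith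
  qed
  have Rpos: "0 < real Rc" using R2 by simp
  have "8 * real Rc ^ 2 * exp (- 2 * real n * (m / 32)\<^sup>2) = exp (ln (8 * real Rc ^ 2) - real n * m^2 / 512)"
  proof -
    have "exp (ln (8 * real Rc ^ 2) - real n * m^2 / 512) = exp (ln (8 * real Rc ^ 2)) * exp (- (real n * m^2 / 512))"
      by (simp only: diff_conv_add_uminus exp_add)
    also have "exp (ln (8 * real Rc ^ 2)) = 8 * real Rc ^ 2" using Rpos by simp
    also have "- (real n * m^2 / 512) = - 2 * real n * (m / 32)\<^sup>2" by (simp add: power2_eq_square field_simps)
    finally show ?thesis by simp
  qed
  also have "ln (8 * real Rc ^ 2) = ln 8 + 2 * ln (real Rc)"
    using Rpos by (simp add: ln_mult ln_realpow)
  also have "exp (ln 8 + 2 * ln (real Rc) - real n * m^2 / 512) \<le> exp (ln \<delta>)"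
    using key by simp
  also have "exp (ln \<delta>) = \<delta>" using d0 by simp
  finally show ?thesis using n0 by simp
qed

theorem theorem5p2:
  shows "\<exists>\<eta> K::real. \<eta> \<ge> 1/256 \<and> K > 0 \<and>
    (\<forall>(d::nat) (c::real) (\<sigma>::real) (\<epsilon>::real) (\<delta>::real) \<mu> PP DD (M::real \<Rightarrow> real).
      0 < c \<and> c < 1/2 \<and> 0 < \<sigma> \<and> \<sigma> < 1 \<and> 0 < \<epsilon> \<and> \<epsilon> < 1 \<and> 0 < \<delta> \<and> \<delta> < 1 \<and>
      is_density d \<mu> \<and> PP \<subseteq> P_O d c \<and> (\<forall>f\<in>DD. is_density d f) \<and>
      (\<forall>e>0. 0 \<le> M e \<and> M e \<le> 1) \<and> M (\<epsilon>/2) > 0 \<and>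
      condition4 d DD M c \<and>
      (\<forall>P\<in>DD. smooth d \<sigma> \<mu> P) \<and>
      fat_finite d (\<eta> * c * \<sigma> * M (\<epsilon>/2)) PP \<and>
      cover_finite d (\<eta> * c * M (\<epsilon>/2)) DD
      \<longrightarrow>
      (\<exists>A :: nat \<Rightarrow> (nat \<Rightarrow> (nat \<Rightarrow> real) \<times> bool \<times> real) \<Rightarrow> real.
        \<forall>n::nat. real n \<ge> K * (1 / (\<eta> * M (\<epsilon>/2)^2)) *
             (real (fat d (\<eta> * c * \<sigma> * M (\<epsilon>/2)) PP) * ln (1 / (\<eta> * c * \<sigma> * M (\<epsilon>/2)))
              + ln (real (covering_number d (\<eta> * c * M (\<epsilon>/2)) DD) / \<delta>))
          \<longrightarrow> (\<forall>D. realizable d PP DD D \<and> integrable D outcome0 \<and> integrable D outcome1 \<longrightarrow>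
                 measure (\<Pi>\<^sub>M i\<in>{..<n}. censored d D)
                   {\<omega> \<in> space (\<Pi>\<^sub>M i\<in>{..<n}. censored d D). \<bar>A n \<omega> - ate D\<bar> \<le> \<epsilon>}
                 \<ge> 1 - \<delta>)))"
proof (rule exI[of _ "1/256"], rule exI[of _ "10::real"], intro conjI allI impI)
  show "(1/256::real) \<ge> 1/256" by simp
  show "(10::real) > 0" by simp
  fix d :: nat and c \<sigma> \<epsilon> \<delta> :: real and \<mu> PP DD and M :: "real \<Rightarrow> real"
  assume H: "0 < c \<and> c < 1/2 \<and> 0 < \<sigma> \<and> \<sigma> < 1 \<and> 0 < \<epsilon> \<and> \<epsilon> < 1 \<and> 0 < \<delta> \<and> \<delta> < 1 \<and>
      is_density d \<mu> \<and> PP \<subseteq> P_O d c \<and> (\<forall>f\<in>DD. is_density d f) \<and>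
      (\<forall>e>0. 0 \<le> M e \<and> M e \<le> 1) \<and> M (\<epsilon>/2) > 0 \<and>
      condition4 d DD M c \<and>
      (\<forall>P\<in>DD. smooth d \<sigma> \<mu> P) \<and>
      fat_finite d (1/256 * c * \<sigma> * M (\<epsilon>/2)) PP \<and>
      cover_finite d (1/256 * c * M (\<epsilon>/2)) DD"
  hence c0: "0 < c" and c1: "c < 1/2" and s0: "0 < \<sigma>" and s1: "\<sigma> < 1" and e: "0 < \<epsilon>"
    and d0: "0 < \<delta>" and d1: "\<delta> < 1" and PPs: "PP \<subseteq> P_O d c" and DDd: "\<forall>f\<in>DD. is_density d f"
    and M1: "M (\<epsilon>/2) \<le> 1" and Mp: "0 < M (\<epsilon>/2)" and cond: "condition4 d DD M c"
    and cf: "cover_finite d (1/256 * c * M (\<epsilon>/2)) DD"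
    by (auto simp del: times_divide_eq_left)
  define \<alpha> where "\<alpha> = 1/256 * c * M (\<epsilon>/2)"
  have \<alpha>a: "\<alpha> = c * M (\<epsilon>/2) / 256" by (simp add: \<alpha>_def)
  define N where "N = covering_number d \<alpha> DD"
  have ne: "{card C | C. is_cover d \<alpha> DD C} \<noteq> {}" using cf by (auto simp: cover_finite_def \<alpha>_def)
  obtain C0 where C0: "is_cover d \<alpha> DD C0" and cardC0: "card C0 = N"
    using Inf_nat_def1[OF ne] unfolding N_def covering_number_def by auto
  define rep where "rep Q = (SOME P. P \<in> DD \<and> tv_dist (dens_meas d P) Q \<le> \<alpha>)" for Q
  define C1 where "C1 = {Q \<in> C0. \<exists>P\<in>DD. tv_dist (dens_meas d P) Q \<le> \<alpha>}"
  define R where "R = rep ` C1"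
  have finC0: "finite C0" using C0 by (simp add: is_cover_def)
  have C1C0: "C1 \<subseteq> C0" by (auto simp: C1_def)
  have finR: "finite R" unfolding R_def using finite_subset[OF C1C0 finC0] by simp
  have repQ: "rep Q \<in> DD \<and> tv_dist (dens_meas d (rep Q)) Q \<le> \<alpha>" if "Q \<in> C1" for Q
  proof -
    have "\<exists>P. P \<in> DD \<and> tv_dist (dens_meas d P) Q \<le> \<alpha>" using that by (auto simp: C1_def)
    from someI_ex[OF this] show ?thesis unfolding rep_def .
  qed
  have RD: "R \<subseteq> DD" using repQ by (auto simp: R_def)
  have cardR: "card R \<le> N"
    using card_image_le[OF finite_subset[OF C1C0 finC0], of rep] card_mono[OF finC0 C1C0] cardC0
    by (simp add: R_def)
  have repr: "\<forall>f\<in>DD. \<exists>P\<in>R. \<forall>S\<in>sets (cov_base d). \<bar>Pm d f S - Pm d P S\<bar> \<le> 2 * (c * M (\<epsilon>/2) / 256)"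
  proof
    fix f assume f: "f \<in> DD"
    obtain Q where Q: "Q \<in> C0" "tv_dist (dens_meas d f) Q \<le> \<alpha>" using C0 f by (auto simp: is_cover_def)
    have QC1: "Q \<in> C1" using Q f by (auto simp: C1_def)
    have pQ: "prob_space Q" "sets Q = sets (cov_base d)" using C0 Q by (auto simp: is_cover_def)
    have fd: "is_density d f" using f DDd by auto
    have rd: "is_density d (rep Q)" using repQ[OF QC1] DDd by auto
    show "\<exists>P\<in>R. \<forall>S\<in>sets (cov_base d). \<bar>Pm d f S - Pm d P S\<bar> \<le> 2 * (c * M (\<epsilon>/2) / 256)"
    proof (intro bexI ballI)
      fix S assume S: "S \<in> sets (cov_base d)"
      have "\<bar>Pm d f S - measure Q S\<bar> \<le> \<alpha>" by (rule tv_le[OF fd pQ Q(2) S])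
      moreover have "\<bar>Pm d (rep Q) S - measure Q S\<bar> \<le> \<alpha>" by (rule tv_le[OF rd pQ conjunct2[OF repQ[OF QC1]] S])
      ultimately show "\<bar>Pm d f S - Pm d (rep Q) S\<bar> \<le> 2 * (c * M (\<epsilon>/2) / 256)"
        unfolding \<alpha>a abs_le_iff by linarith
    qed (use QC1 in \<open>auto simp: R_def\<close>)
  qed
  obtain xs where xs: "set xs = R" "distinct xs" using finite_distinct_list[OF finR] by auto
  show "\<exists>A :: nat \<Rightarrow> (nat \<Rightarrow> (nat \<Rightarrow> real) \<times> bool \<times> real) \<Rightarrow> real.
        \<forall>n::nat. real n \<ge> 10 * (1 / (1/256 * M (\<epsilon>/2)^2)) *
             (real (fat d (1/256 * c * \<sigma> * M (\<epsilon>/2)) PP) * ln (1 / (1/256 * c * \<sigma> * M (\<epsilon>/2)))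
              + ln (real (covering_number d (1/256 * c * M (\<epsilon>/2)) DD) / \<delta>))
          \<longrightarrow> (\<forall>D. realizable d PP DD D \<and> integrable D outcome0 \<and> integrable D outcome1 \<longrightarrow>
                 measure (\<Pi>\<^sub>M i\<in>{..<n}. censored d D)
                   {\<omega> \<in> space (\<Pi>\<^sub>M i\<in>{..<n}. censored d D). \<bar>A n \<omega> - ate D\<bar> \<le> \<epsilon>}
                 \<ge> 1 - \<delta>)"
  proof (intro exI[of _ "alg d c \<epsilon> M R xs"] allI impI)
    fix n :: nat and D
    assume nb: "real n \<ge> 10 * (1 / (1/256 * M (\<epsilon>/2)^2)) *
             (real (fat d (1/256 * c * \<sigma> * M (\<epsilon>/2)) PP) * ln (1 / (1/256 * c * \<sigma> * M (\<epsilon>/2)))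
              + ln (real (covering_number d (1/256 * c * M (\<epsilon>/2)) DD) / \<delta>))"
    assume D: "realizable d PP DD D \<and> integrable D outcome0 \<and> integrable D outcome1"
    have fl: "0 \<le> real (fat d (1/256 * c * \<sigma> * M (\<epsilon>/2)) PP) * ln (1 / (1/256 * c * \<sigma> * M (\<epsilon>/2)))"
    proof -
      have "c * \<sigma> \<le> 1" by (rule mult_le_one) (use c0 c1 s0 s1 in auto)
      hence "c * \<sigma> * M (\<epsilon>/2) \<le> 1" by (rule mult_le_one) (use M1 Mp c0 s0 in auto)
      hence "1/256 * c * \<sigma> * M (\<epsilon>/2) \<le> 1" by simp
      moreover have "0 < 1/256 * c * \<sigma> * M (\<epsilon>/2)" using c0 s0 Mp by simp
      ultimately have "1 \<le> 1 / (1/256 * c * \<sigma> * M (\<epsilon>/2))" by simp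
      hence "0 \<le> ln (1 / (1/256 * c * \<sigma> * M (\<epsilon>/2)))" by simp
      thus ?thesis by simp
    qed
    have nb': "length xs \<ge> 2 \<Longrightarrow> 0 < n \<and> 8 * real (card R)^2 * exp (- 2 * real n * (M (\<epsilon>/2) / 32)\<^sup>2) \<le> \<delta>"
    proof -
      assume L: "length xs \<ge> 2"
      have "card R = length xs" using xs distinct_card by metis
      hence "2 \<le> card R" using L by simp
      moreover have "covering_number d (1/256 * c * M (\<epsilon>/2)) DD = N" by (simp add: N_def \<alpha>_def)
      ultimately show ?thesis
        using n_arith[OF _ cardR d0 d1 Mp fl] nb by simp
    qed
    show "measure (\<Pi>\<^sub>M i\<in>{..<n}. censored d D)
           {\<omega> \<in> space (\<Pi>\<^sub>M i\<in>{..<n}. censored d D). \<bar>alg d c \<epsilon> M R xs n \<omega> - ate D\<bar> \<le> \<epsilon>} \<ge> 1 - \<delta>"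
      using D by (intro alg_correct[OF c0 c1 e d0 Mp cond PPs DDd RD finR xs(1) repr nb']) auto
  qed
qed

end
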